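(* Fix a positive integer $n$ and a nonzero $n$-partition $\lambda$ with $\lambda_n=0$. For every $n$-semistandard tableau $T$ of shape $\lambda$, the final permutation $\pi_T$ of the greedy procedure lies in $S_n^\lambda$.
   Context: Identify $\lambda=(\lambda_1,\dots,\lambda_n)$ with its Young diagram; $c_j$ is the length of column $j$; $\zeta_1<\dots<\zeta_d$ are the distinct column lengths, $\zeta_0:=0$, $\zeta_{d+1}:=n$. $S_n^\lambda$ is the set of permutations $\phi$ (one-line form) with $\phi_{\zeta_{h-1}+1}<\dots<\phi_{\zeta_h}$ for $1\le h\le d+1$. Write $(j,i)$ for the box in column $j$, row $i$. Reading order: $(l,k)\le(j,i)$ iff $l<j$, or $l=j$ and $k\ge i$; convention $(j,c_j+1)$ means $(j-1,1)$. An $n$-semistandard tableau $T$ of shape $\lambda$ has entries in $[n]$, weakly increasing along rows, strictly increasing down columns; $T(j,i)$ is its entry, $C_j$ its $j$-th column. Greedy procedure: $\pi^{(1,1)}$ has first $c_1$ entries those of $C_1$ increasing, followed by the rest of $[n]$ increasing. For $(j,i)$ with $j\ge2$ in reading order from $(2,c_2)$ to $(\lambda_1,1)$, define $\pi^{(j,i)}$ from $\pi:=\pi^{(j,i+1)}$: if $T(j-1,i)=T(j,i)$ set $\pi^{(j,i)}=\pi$; otherwise let $i_0=i$, and given $i_{x-1}$ with $\pi_{i_{x-1}}<T(j,i)$ let $i_x$ be the smallest index $>c_j$ with $\pi_{i_{x-1}}<\pi_{i_x}\le T(j,i)$, stopping at $i_m$ with $\pi_{i_m}=T(j,i)$; set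 $\pi^{(j,i)}_{i_x}=\pi_{i_{x-1}}$ ($1\le x\le m$), $\pi^{(j,i)}_{i_0}=\pi_{i_m}$, others unchanged. $\pi_T:=\pi^{(\lambda_1,1)}$. *)

theory Defs
  imports "HOL-Combinatorics.Permutations"
begin

(* Partitions lam are functions on rows 1..n; a tableau T maps (column j, row i) to T j i.
   Permutations in one-line form are functions pi :: nat => nat with pi permutes {1..n}. *)

definition n_partition :: "nat \<Rightarrow> (nat \<Rightarrow> nat) \<Rightarrow> bool" where
  "n_partition n lam \<longleftrightarrow> (\<forall>i. 1 \<le> i \<and> i < n \<longrightarrow> lam (i+1) \<le> lam i)"

definition col_len :: "nat \<Rightarrow> (nat \<Rightarrow> nat) \<Rightarrow> nat \<Rightarrow> nat" where
  "col_len n lam j = card {i \<in> {1..n}. j \<le> lam i}"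

definition in_shape :: "nat \<Rightarrow> (nat \<Rightarrow> nat) \<Rightarrow> nat \<Rightarrow> nat \<Rightarrow> bool" where
  "in_shape n lam j i \<longleftrightarrow> 1 \<le> i \<and> i \<le> n \<and> 1 \<le> j \<and> j \<le> lam i"

definition semistandard :: "nat \<Rightarrow> (nat \<Rightarrow> nat) \<Rightarrow> (nat \<Rightarrow> nat \<Rightarrow> nat) \<Rightarrow> bool" where
  "semistandard n lam T \<longleftrightarrow>
     (\<forall>j i. in_shape n lam j i \<longrightarrow> T j i \<in> {1..n}) \<and>
     (\<forall>j i. in_shape n lam (j+1) i \<longrightarrow> T j i \<le> T (j+1) i) \<and>
     (\<forall>j i. in_shape n lam j (i+1) \<longrightarrow> T j i < T j (i+1))"

definition col_lengths :: "nat \<Rightarrow> (nat \<Rightarrow> nat) \<Rightarrow> nat set" where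
  "col_lengths n lam = {col_len n lam j | j. 1 \<le> j \<and> j \<le> lam 1}"

definition zeta :: "nat \<Rightarrow> (nat \<Rightarrow> nat) \<Rightarrow> nat list" where
  "zeta n lam = 0 # sorted_list_of_set (col_lengths n lam) @ [n]"

definition S_lam :: "nat \<Rightarrow> (nat \<Rightarrow> nat) \<Rightarrow> (nat \<Rightarrow> nat) set" where
  "S_lam n lam = {phi. phi permutes {1..n} \<and>
     (\<forall>h. 1 \<le> h \<and> h \<le> card (col_lengths n lam) + 1 \<longrightarrow>
        (\<forall>k. zeta n lam ! (h-1) + 1 \<le> k \<and> k < zeta n lam ! h \<longrightarrow> phi k < phi (k+1)))}"

definition greedy_init :: "nat \<Rightarrow> (nat \<Rightarrow> nat) \<Rightarrow> (nat \<Rightarrow> nat \<Rightarrow> nat) \<Rightarrow> nat \<Rightarrow> nat" where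
  "greedy_init n lam T k =
     (if k < 1 \<or> n < k then k
      else if k \<le> col_len n lam 1 then T 1 k
      else sorted_list_of_set ({1..n} - {T 1 i | i. 1 \<le> i \<and> i \<le> col_len n lam 1})
             ! (k - col_len n lam 1 - 1))"

definition chain_ok :: "nat \<Rightarrow> nat \<Rightarrow> nat \<Rightarrow> (nat \<Rightarrow> nat) \<Rightarrow> nat \<Rightarrow> nat \<Rightarrow> bool" where
  "chain_ok n c t pi p k \<longleftrightarrow> c < k \<and> k \<le> n \<and> pi p < pi k \<and> pi k \<le> t"

(* chain n c t pi p = [i_1, ..., i_m] starting from i_0 = p:
   i_x is the smallest index > c with pi(i_(x-1)) < pi(i_x) <= t; stop when pi(i_m) = t *)
function chain :: "nat \<Rightarrow> nat \<Rightarrow> nat \<Rightarrow> (nat \<Rightarrow> nat) \<Rightarrow> nat \<Rightarrow> nat list" where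
  "chain n c t pi p =
     (if pi p < t \<and> (\<exists>k. chain_ok n c t pi p k)
      then (let q = (LEAST k. chain_ok n c t pi p k) in q # chain n c t pi q)
      else [])"
  by pat_completeness auto
termination
proof (relation "measure (\<lambda>(n, c, t, pi, p). t - pi p)")
  fix n c t pi p q
  assume h: "pi p < t \<and> (\<exists>k. chain_ok n c t pi p k)" and q: "q = (LEAST k. chain_ok n c t pi p k)"
  then have "chain_ok n c t pi p q" using LeastI_ex by metis
  then show "((n, c, t, pi, q), n, c, t, pi, p) \<in> measure (\<lambda>(n, c, t, pi, p). t - pi p)"
    using h unfolding chain_ok_def by auto
qed auto

(* given indices i_0 # [i_1..i_m], set pi'(i_x) = pi(i_(x-1)) for 1<=x<=m, pi'(i_0) = pi(i_m) *)
definition cycle_along :: "(nat \<Rightarrow> nat) \<Rightarrow> nat list \<Rightarrow> nat \<Rightarrow> nat" where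
  "cycle_along pi is k =
     (if k = hd is then pi (last is)
      else (case [x \<leftarrow> [1..<length is]. is ! x = k] of
              [] \<Rightarrow> pi k
            | x # _ \<Rightarrow> pi (is ! (x - 1))))"

(* step producing pi^(j,i) from pi = pi^(j,i+1) *)
definition greedy_step :: "nat \<Rightarrow> (nat \<Rightarrow> nat) \<Rightarrow> (nat \<Rightarrow> nat \<Rightarrow> nat) \<Rightarrow> nat \<Rightarrow> nat \<Rightarrow>
    (nat \<Rightarrow> nat) \<Rightarrow> (nat \<Rightarrow> nat)" where
  "greedy_step n lam T j i pi =
     (if T (j-1) i = T j i then pi
      else cycle_along pi (i # chain n (col_len n lam j) (T j i) pi i))"

definition greedy_perm :: "nat \<Rightarrow> (nat \<Rightarrow> nat) \<Rightarrow> (nat \<Rightarrow> nat \<Rightarrow> nat) \<Rightarrow> nat \<Rightarrow> nat" where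
  "greedy_perm n lam T =
     fold (\<lambda>j pi. fold (\<lambda>i. greedy_step n lam T j i) (rev [1..<col_len n lam j + 1]) pi)
          [2..<lam 1 + 1] (greedy_init n lam T)"

end

theory Submission
  imports Defs
begin



declare chain.simps[simp del]

lemma chain_Cons:
  assumes "pi p < t" "chain_ok n c t pi p k0"
  shows "chain n c t pi p = (LEAST k. chain_ok n c t pi p k) # chain n c t pi (LEAST k. chain_ok n c t pi p k)"
  using assms by (subst chain.simps) (auto simp: Let_def)

lemma chain_Nil:
  assumes "\<not> (pi p < t \<and> (\<exists>k. chain_ok n c t pi p k))"
  shows "chain n c t pi p = []"
  using assms by (subst chain.simps) auto

lemma chain_props:
  "(\<forall>q\<in>set (chain n c t pi p). c < q \<and> q \<le> n \<and> pi q \<le> t) \<and>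
   sorted_wrt (\<lambda>a b. pi a < pi b) (p # chain n c t pi p) \<and>
   (\<forall>x < length (chain n c t pi p). \<forall>k. c < k \<and> k < chain n c t pi p ! x \<and> k \<le> n \<longrightarrow>
        \<not> (pi ((p # chain n c t pi p) ! x) < pi k \<and> pi k \<le> t))"
proof (induction n c t pi p rule: chain.induct)
  case (1 n c t pi p)
  show ?case
  proof (cases "pi p < t \<and> (\<exists>k. chain_ok n c t pi p k)")
    case False
    then show ?thesis by (simp add: chain_Nil)
  next
    case True
    define q where "q = (LEAST k. chain_ok n c t pi p k)"
    from True have ok: "chain_ok n c t pi p q" unfolding q_def by (metis LeastI_ex)
    have eq: "chain n c t pi p = q # chain n c t pi q"
      using True chain_Cons q_def by metis
    have IH: "(\<forall>q'\<in>set (chain n c t pi q). c < q' \<and> q' \<le> n \<and> pi q' \<le> t) \<and>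
      sorted_wrt (\<lambda>a b. pi a < pi b) (q # chain n c t pi q) \<and>
      (\<forall>x < length (chain n c t pi q). \<forall>k. c < k \<and> k < chain n c t pi q ! x \<and> k \<le> n \<longrightarrow>
        \<not> (pi ((q # chain n c t pi q) ! x) < pi k \<and> pi k \<le> t))"
      using "1" True q_def by blast
    have min: "\<not> chain_ok n c t pi p k" if "k < q" for k
      using not_less_Least that q_def by blast
    show ?thesis
    proof (intro conjI)
      show "\<forall>q'\<in>set (chain n c t pi p). c < q' \<and> q' \<le> n \<and> pi q' \<le> t"
        using IH ok eq unfolding chain_ok_def by auto
      show "sorted_wrt (\<lambda>a b. pi a < pi b) (p # chain n c t pi p)"
        using IH ok eq unfolding chain_ok_def by (auto intro: less_trans)
      show "\<forall>x < length (chain n c t pi p). \<forall>k. c < k \<and> k < chain n c t pi p ! x \<and> k \<le> n \<longrightarrow>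
        \<not> (pi ((p # chain n c t pi p) ! x) < pi k \<and> pi k \<le> t)"
      proof (intro allI impI)
        fix x k assume x: "x < length (chain n c t pi p)"
          and k: "c < k \<and> k < chain n c t pi p ! x \<and> k \<le> n"
        show "\<not> (pi ((p # chain n c t pi p) ! x) < pi k \<and> pi k \<le> t)"
        proof (cases x)
          case 0
          then show ?thesis using k min[of k] eq unfolding chain_ok_def by auto
        next
          case (Suc x')
          then show ?thesis using IH k x eq by auto
        qed
      qed
    qed
  qed
qed

lemma chain_last:
  "c < q0 \<and> q0 \<le> n \<and> pi q0 = t \<and> pi p < t \<longrightarrow>
     chain n c t pi p \<noteq> [] \<and> pi (last (chain n c t pi p)) = t"
proof (induction n c t pi p rule: chain.induct)
  case (1 n c t pi p)
  show ?case
  proof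
    assume A: "c < q0 \<and> q0 \<le> n \<and> pi q0 = t \<and> pi p < t"
    then have ok0: "chain_ok n c t pi p q0" unfolding chain_ok_def by auto
    define q where "q = (LEAST k. chain_ok n c t pi p k)"
    from ok0 have ok: "chain_ok n c t pi p q" unfolding q_def by (metis LeastI)
    have eq: "chain n c t pi p = q # chain n c t pi q"
      using A ok0 chain_Cons q_def by metis
    show "chain n c t pi p \<noteq> [] \<and> pi (last (chain n c t pi p)) = t"
    proof (cases "pi q = t")
      case True
      then have "chain n c t pi q = []" by (intro chain_Nil) simp
      then show ?thesis using eq True by simp
    next
      case False
      with ok have "pi q < t" unfolding chain_ok_def by auto
      then have "chain n c t pi q \<noteq> [] \<and> pi (last (chain n c t pi q)) = t"
        using "1" A ok0 q_def by blast
      then show ?thesis using eq by simp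
    qed
  qed
qed

lemma filter_single:
  assumes "distinct is" "1 \<le> x" "x < length is"
  shows "[y \<leftarrow> [1..<length is]. is ! y = is ! x] = [x]"
proof (rule sorted_distinct_set_unique)
  show "set [y \<leftarrow> [1..<length is]. is ! y = is ! x] = set [x]"
    using assms by (auto simp: nth_eq_iff_index_eq)
qed (auto intro!: sorted_wrt_filter)




lemma cyc_hd: "cycle_along pi is (hd is) = pi (last is)"
  by (simp add: cycle_along_def)

lemma cyc_nth:
  assumes "distinct is" "1 \<le> x" "x < length is"
  shows "cycle_along pi is (is ! x) = pi (is ! (x - 1))"
proof -
  have ne: "is \<noteq> []" using assms by auto
  have h: "hd is = is ! 0" using ne by (simp add: hd_conv_nth)
  have l0: "0 < length is" using assms(3) by linarith
  have "is ! x \<noteq> is ! 0" using nth_eq_iff_index_eq[OF assms(1) assms(3) l0] assms(2) by simp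
  then have "is ! x \<noteq> hd is" using h by simp
  then show ?thesis unfolding cycle_along_def using filter_single[OF assms] by simp
qed

lemma cyc_out:
  assumes "k \<notin> set is" "is \<noteq> []"
  shows "cycle_along pi is k = pi k"
proof -
  have "k \<noteq> hd is" using assms by auto
  moreover have "[y \<leftarrow> [1..<length is]. is ! y = k] = []"
    using assms by (auto simp: filter_empty_conv)
  ultimately show ?thesis unfolding cycle_along_def by simp
qed

lemma cyc_comp: "cycle_along pi is = pi \<circ> cycle_along id is"
proof
  fix k
  show "cycle_along pi is k = (pi \<circ> cycle_along id is) k"
    by (cases "[x \<leftarrow> [1..<length is]. is ! x = k]") (simp_all add: cycle_along_def)
qed




lemma cyc_id_permutes:
  assumes d: "distinct is" and ne: "is \<noteq> []"
  shows "cycle_along id is permutes set is"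
proof (rule inj_imp_permutes)
  let ?s = "cycle_along id is"
  have val0: "?s (is ! 0) = is ! (length is - 1)"
    using cyc_hd[of id "is"] ne by (simp add: hd_conv_nth last_conv_nth)
  have valS: "?s (is ! x) = is ! (x - 1)" if "1 \<le> x" "x < length is" for x
    using cyc_nth[OF d that, of id] by simp
  have mem: "?s a \<in> set is \<and> (\<exists>x<length is. a = is ! x \<and> ?s a = (if x = 0 then is ! (length is - 1) else is ! (x - 1)))"
    if "a \<in> set is" for a
  proof -
    from that obtain x where x: "x < length is" "a = is ! x" by (auto simp: in_set_conv_nth)
    show ?thesis
    proof (cases "x = 0")
      case True
      have lastmem: "is ! (length is - 1) \<in> set is" using ne by (metis last_conv_nth last_in_set)
      then show ?thesis using val0 x True by (auto intro!: exI[of _ x])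
    next
      case False
      have "is ! (x - 1) \<in> set is" using x by simp
      then show ?thesis using valS[of x] x False by (auto intro!: exI[of _ x])
    qed
  qed
  show "inj_on ?s (set is)"
  proof (rule inj_onI)
    fix a b assume a: "a \<in> set is" and b: "b \<in> set is" and e: "?s a = ?s b"
    from mem[OF a] obtain x where x: "x < length is" "a = is ! x"
      "?s a = (if x = 0 then is ! (length is - 1) else is ! (x - 1))" by blast
    from mem[OF b] obtain y where y: "y < length is" "b = is ! y"
      "?s b = (if y = 0 then is ! (length is - 1) else is ! (y - 1))" by blast
    define x' where "x' = (if x = 0 then length is - 1 else x - 1)"
    define y' where "y' = (if y = 0 then length is - 1 else y - 1)"
    have x'l: "x' < length is" using x(1) unfolding x'_def by auto
    have y'l: "y' < length is" using y(1) unfolding y'_def by auto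
    have "is ! x' = is ! y'" using e x(3) y(3) unfolding x'_def y'_def by (auto split: if_splits)
    then have "x' = y'" using nth_eq_iff_index_eq[OF d x'l y'l] by simp
    then have "x = y" using x(1) y(1) unfolding x'_def y'_def by (auto split: if_splits)
    then show "a = b" using x y by simp
  qed
  show "finite (set is)" by simp
  show "?s x \<in> set is" if "x \<in> set is" for x
    using mem[OF that] by blast
  show "?s x = x" if "x \<notin> set is" for x
    using cyc_out[OF that ne] by simp
qed

lemma cyc_permutes:
  assumes "pi permutes {1..n}" "distinct is" "is \<noteq> []" "set is \<subseteq> {1..n}"
  shows "cycle_along pi is permutes {1..n}"
proof -
  have "cycle_along id is permutes {1..n}"
    using permutes_subset[OF cyc_id_permutes[OF assms(2,3)] assms(4)] .
  then have "pi \<circ> cycle_along id is permutes {1..n}" using permutes_compose assms(1) by blast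
  then show ?thesis using cyc_comp[of pi "is"] by simp
qed




definition Inv :: "nat \<Rightarrow> (nat\<Rightarrow>nat) \<Rightarrow> (nat\<Rightarrow>nat\<Rightarrow>nat) \<Rightarrow> nat \<Rightarrow> (nat\<Rightarrow>nat) \<Rightarrow> bool" where
"Inv n lam T j pi \<longleftrightarrow> pi permutes {1..n} \<and>
   (\<forall>k. 1 \<le> k \<and> k \<le> col_len n lam j \<longrightarrow> pi k = T j k) \<and>
   (\<forall>k. col_len n lam j < k \<and> k < n \<and> k \<notin> {col_len n lam l | l. 1 \<le> l \<and> l \<le> j} \<longrightarrow> pi k < pi (k+1))"

definition Q :: "nat \<Rightarrow> (nat\<Rightarrow>nat) \<Rightarrow> (nat\<Rightarrow>nat\<Rightarrow>nat) \<Rightarrow> nat \<Rightarrow> nat \<Rightarrow> (nat\<Rightarrow>nat) \<Rightarrow> bool" where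
"Q n lam T j i pi \<longleftrightarrow> pi permutes {1..n} \<and>
   (\<forall>k. 1 \<le> k \<and> k < i \<longrightarrow> pi k = T (j-1) k) \<and>
   (\<forall>k. i \<le> k \<and> k \<le> col_len n lam j \<longrightarrow> pi k = T j k) \<and>
   (\<forall>k. col_len n lam j < k \<and> k < n \<and> k \<notin> {col_len n lam l | l. 1 \<le> l \<and> l \<le> j} \<longrightarrow> pi k < pi (k+1))"

lemma sorted_less_distinct: "sorted_wrt (\<lambda>a b. f a < (f b::nat)) xs \<Longrightarrow> distinct xs"
  by (induction xs) auto

context
  fixes n :: nat and lam :: "nat \<Rightarrow> nat" and T :: "nat \<Rightarrow> nat \<Rightarrow> nat"
  assumes n0: "0 < n"
    and part: "n_partition n lam"
    and nz: "\<exists>i\<in>{1..n}. lam i \<noteq> 0"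
    and ln: "lam n = 0"
    and ss: "semistandard n lam T"
begin

lemma lam_mono: assumes "1 \<le> i" "i \<le> i'" "i' \<le> n" shows "lam i' \<le> lam i"
  using assms(2,3)
proof (induction i' rule: dec_induct)
  case base then show ?case by simp
next
  case (step m)
  then have "lam (m+1) \<le> lam m" using part assms(1) unfolding n_partition_def by auto
  with step show ?case by simp
qed

lemma col_set: "1 \<le> j \<Longrightarrow> {i\<in>{1..n}. j \<le> lam i} = {1..col_len n lam j}"
proof -
  assume j: "1 \<le> j"
  define S where "S = {i\<in>{1..n}. j \<le> lam i}"
  have fin: "finite S" unfolding S_def by auto
  have dc: "y \<in> S" if "x \<in> S" "1 \<le> y" "y \<le> x" for x y
    using that lam_mono[of y x] unfolding S_def by auto
  have "S = {1..card S}"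
  proof (cases "S = {}")
    case True then show ?thesis by simp
  next
    case False
    have "S = {1..Max S}"
    proof
      show "S \<subseteq> {1..Max S}" using fin unfolding S_def by auto
      show "{1..Max S} \<subseteq> S" using dc Max_in[OF fin False] by auto
    qed
    then show ?thesis by (metis card_atLeastAtMost diff_Suc_1 One_nat_def)
  qed
  then show ?thesis unfolding S_def col_len_def by simp
qed

lemma in_col: "1 \<le> j \<Longrightarrow> 1 \<le> i \<Longrightarrow> i \<le> n \<Longrightarrow> (j \<le> lam i \<longleftrightarrow> i \<le> col_len n lam j)"
  using col_set[of j] by (auto simp: set_eq_iff)

lemma col_le_n: "1 \<le> j \<Longrightarrow> col_len n lam j \<le> n"
proof -
  assume j: "1 \<le> j"
  have "card {i\<in>{1..n}. j \<le> lam i} \<le> card {1..n}" by (rule card_mono) auto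
  then show ?thesis unfolding col_len_def by simp
qed

lemma col_lt_n: "1 \<le> j \<Longrightarrow> col_len n lam j < n"
proof (rule ccontr)
  assume j: "1 \<le> j" and "\<not> col_len n lam j < n"
  then have "n \<le> col_len n lam j" by simp
  then have "j \<le> lam n" using in_col[OF j, of n] n0 by simp
  with ln j show False by simp
qed

lemma lam1: "1 \<le> lam 1"
proof -
  from nz obtain i where "i \<in> {1..n}" "lam i \<noteq> 0" by auto
  then show ?thesis using lam_mono[of 1 i] by auto
qed

lemma col_ge1: "1 \<le> j \<Longrightarrow> j \<le> lam 1 \<Longrightarrow> 1 \<le> col_len n lam j"
  using in_col[of j 1] n0 by simp

lemma col_anti: "1 \<le> j \<Longrightarrow> j \<le> j' \<Longrightarrow> col_len n lam j' \<le> col_len n lam j"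
  unfolding col_len_def by (rule card_mono) auto

lemma in_shape_iff: "1 \<le> j \<Longrightarrow> in_shape n lam j i \<longleftrightarrow> 1 \<le> i \<and> i \<le> col_len n lam j"
  using in_col[of j i] col_lt_n[of j] unfolding in_shape_def by auto

lemma ss1: "in_shape n lam j i \<Longrightarrow> T j i \<in> {1..n}"
  using ss unfolding semistandard_def by blast

lemma ss2: "in_shape n lam (j+1) i \<Longrightarrow> T j i \<le> T (j+1) i"
  using ss unfolding semistandard_def by blast

lemma T_range: "1 \<le> j \<Longrightarrow> 1 \<le> i \<Longrightarrow> i \<le> col_len n lam j \<Longrightarrow> T j i \<in> {1..n}"
  using ss1 in_shape_iff[of j i] by simp

lemma T_row: "1 \<le> j \<Longrightarrow> 1 \<le> i \<Longrightarrow> i \<le> col_len n lam (j+1) \<Longrightarrow> T j i \<le> T (j+1) i"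
  using ss2 in_shape_iff[of "j+1" i] by simp

lemma ss3: "in_shape n lam j (i+1) \<Longrightarrow> T j i < T j (i+1)"
  using ss unfolding semistandard_def by blast

lemma T_col: "1 \<le> j \<Longrightarrow> 1 \<le> i \<Longrightarrow> i < i' \<Longrightarrow> i' \<le> col_len n lam j \<Longrightarrow> T j i < T j i'"
proof (induction i' rule: less_induct)
  case (less i')
  have sh: "in_shape n lam j i'" using less.prems in_shape_iff[of j i'] by auto
  show ?case
  proof (cases "i' = i + 1")
    case True
    then show ?thesis using ss3[of j i] sh by simp
  next
    case False
    then have "i < i' - 1" using less.prems by auto
    then have "T j i < T j (i' - 1)" using less.IH[of "i' - 1"] less.prems by simp
    moreover have "T j (i' - 1) < T j i'"
      using ss3[of j "i' - 1"] sh less.prems by simp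
    ultimately show ?thesis by simp
  qed
qed

end



context
  fixes n :: nat and lam :: "nat \<Rightarrow> nat" and T :: "nat \<Rightarrow> nat \<Rightarrow> nat"
  assumes n0: "0 < n"
    and part: "n_partition n lam"
    and nz: "\<exists>i\<in>{1..n}. lam i \<noteq> 0"
    and ln: "lam n = 0"
    and ss: "semistandard n lam T"
begin

lemma step:
  assumes j2: "2 \<le> j" and i1: "1 \<le> i" and ic: "i \<le> col_len n lam j"
    and q: "Q n lam T j (i+1) pi"
  shows "Q n lam T j i (greedy_step n lam T j i pi)"
proof -
  let ?c = "col_len n lam j"
  let ?E = "{col_len n lam l | l. 1 \<le> l \<and> l \<le> j}"
  define t where "t = T j i"
  have cn: "?c < n" using col_lt_n[OF n0 part nz ln ss, of j] j2 by simp
  have cc: "?c \<le> col_len n lam (j-1)" using col_anti[OF n0 part nz ln ss, of "j-1" j] j2 by simp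
  have perm: "pi permutes {1..n}" using q unfolding Q_def by blast
  have low: "\<And>k. 1 \<le> k \<Longrightarrow> k < i + 1 \<Longrightarrow> pi k = T (j-1) k" using q unfolding Q_def by blast
  have high: "\<And>k. i + 1 \<le> k \<Longrightarrow> k \<le> ?c \<Longrightarrow> pi k = T j k" using q unfolding Q_def by blast
  have srt: "\<And>k. ?c < k \<Longrightarrow> k < n \<Longrightarrow> k \<notin> ?E \<Longrightarrow> pi k < pi (k+1)" using q unfolding Q_def by blast
  have pii: "pi i = T (j-1) i" using low[of i] i1 by simp
  have jj: "j - 1 + 1 = j" using j2 by simp
  have row: "T (j-1) i \<le> T j i"
    using T_row[OF n0 part nz ln ss, of "j-1" i] j2 i1 ic jj by simp
  show ?thesis
  proof (cases "T (j-1) i = T j i")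
    case True
    then have gs: "greedy_step n lam T j i pi = pi" unfolding greedy_step_def by simp
    show ?thesis unfolding gs Q_def
    proof (intro conjI allI impI)
      show "pi permutes {1..n}" by (rule perm)
      fix k
      show "pi k = T (j-1) k" if "1 \<le> k \<and> k < i" using low that by simp
      show "pi k = T j k" if "i \<le> k \<and> k \<le> ?c"
      proof (cases "k = i")
        case True then show ?thesis using pii \<open>T (j-1) i = T j i\<close> by simp
      next
        case False then show ?thesis using high that by simp
      qed
      show "pi k < pi (k+1)" if "?c < k \<and> k < n \<and> k \<notin> ?E" using srt that by blast
    qed
  next
    case False
    then have vt: "pi i < t" using pii row unfolding t_def by simp
    have gs: "greedy_step n lam T j i pi = cycle_along pi (i # chain n ?c t pi i)"
      using False unfolding greedy_step_def t_def by simp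
    have tr: "t \<in> {1..n}" using T_range[OF n0 part nz ln ss, of j i] j2 i1 ic unfolding t_def by simp
    have img: "pi ` {1..n} = {1..n}" using permutes_image[OF perm] .
    then obtain q0 where q0: "q0 \<in> {1..n}" "pi q0 = t" using tr by (metis imageE)
    have q0c: "?c < q0"
    proof (rule ccontr)
      assume "\<not> ?c < q0"
      then have q0le: "q0 \<le> ?c" by simp
      consider "q0 < i" | "q0 = i" | "i < q0" by arith
      then show False
      proof cases
        case 1
        then have "pi q0 = T (j-1) q0" using low q0 by simp
        moreover have "T (j-1) q0 < T (j-1) i"
          using T_col[OF n0 part nz ln ss, of "j-1" q0 i] 1 q0 j2 ic cc by simp
        ultimately show False using q0 row unfolding t_def by simp
      next
        case 2 then show False using vt q0 by simp
      next
        case 3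
        then have "pi q0 = T j q0" using high q0le by simp
        moreover have "T j i < T j q0"
          using T_col[OF n0 part nz ln ss, of j i q0] 3 i1 j2 q0le by simp
        ultimately show False using q0 unfolding t_def by simp
      qed
    qed
    define ch where "ch = chain n ?c t pi i"
    define ys where "ys = i # ch"
    have P: "(\<forall>q\<in>set ch. ?c < q \<and> q \<le> n \<and> pi q \<le> t) \<and>
       sorted_wrt (\<lambda>a b. pi a < pi b) ys \<and>
       (\<forall>x < length ch. \<forall>k. ?c < k \<and> k < ch ! x \<and> k \<le> n \<longrightarrow>
          \<not> (pi (ys ! x) < pi k \<and> pi k \<le> t))"
      using chain_props[of n ?c t pi i] unfolding ch_def ys_def by blast
    have P1: "\<And>q. q \<in> set ch \<Longrightarrow> ?c < q \<and> q \<le> n \<and> pi q \<le> t" using P by blast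
    have P2: "sorted_wrt (\<lambda>a b. pi a < pi b) ys" using P by blast
    have P3: "\<And>x k. x < length ch \<Longrightarrow> ?c < k \<Longrightarrow> k < ch ! x \<Longrightarrow> k \<le> n \<Longrightarrow>
          \<not> (pi (ys ! x) < pi k \<and> pi k \<le> t)" using P by blast
    have L: "ch \<noteq> [] \<and> pi (last ch) = t"
      using chain_last[of ?c q0 n pi t i] q0c q0 vt unfolding ch_def by auto
    have dist: "distinct ys" using sorted_less_distinct[OF P2] .
    have sub: "set ys \<subseteq> {1..n}" using P1 i1 ic cn unfolding ys_def by force
    have isne: "ys \<noteq> []" unfolding ys_def by simp
    define new where "new = cycle_along pi ys"
    have gs': "greedy_step n lam T j i pi = new" using gs unfolding new_def ys_def ch_def by simp
    have newperm: "new permutes {1..n}" unfolding new_def using cyc_permutes[OF perm dist isne sub] .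
    have newout: "\<And>k. k \<notin> set ys \<Longrightarrow> new k = pi k" unfolding new_def using cyc_out isne by blast
    have newi: "new i = t"
    proof -
      have "new i = pi (last ys)" unfolding new_def using cyc_hd[of pi "ys"] unfolding ys_def by simp
      also have "last ys = last ch" unfolding ys_def using L by simp
      finally show ?thesis using L by simp
    qed
    have newch: "\<And>x. x < length ch \<Longrightarrow> new (ch ! x) = pi (ys ! x)"
    proof -
      fix x assume x: "x < length ch"
      have "new (ys ! (x+1)) = pi (ys ! (x + 1 - 1))"
        unfolding new_def using cyc_nth[OF dist, of "x+1" pi] x unfolding ys_def by simp
      then show "new (ch ! x) = pi (ys ! x)" unfolding ys_def by simp
    qed
    have vals: "\<And>a b. a < b \<Longrightarrow> b < length ys \<Longrightarrow> pi (ys ! a) < pi (ys ! b)"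
      using P2 by (simp add: sorted_wrt_iff_nth_less)
    have inj: "inj pi" using permutes_inj[OF perm] .
    have notin_low: "\<And>k. k \<le> ?c \<Longrightarrow> k \<noteq> i \<Longrightarrow> k \<notin> set ys"
      using P1 unfolding ys_def by force
    show ?thesis unfolding gs' Q_def
    proof (intro conjI allI impI)
      show "new permutes {1..n}" by (rule newperm)
      fix k
      show "new k = T (j-1) k" if "1 \<le> k \<and> k < i"
        using newout[of k] notin_low[of k] low[of k] that ic by simp
      show "new k = T j k" if "i \<le> k \<and> k \<le> ?c"
      proof (cases "k = i")
        case True then show ?thesis using newi unfolding t_def by simp
      next
        case False then show ?thesis using newout[of k] notin_low[of k] high[of k] that by simp
      qed
      show "new k < new (k+1)" if kk: "?c < k \<and> k < n \<and> k \<notin> ?E"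
      proof -
        have old: "pi k < pi (k+1)" using srt kk by blast
        have mem: "\<And>m. ?c < m \<Longrightarrow> (m \<in> set ys \<longleftrightarrow> (\<exists>x < length ch. m = ch ! x))"
          unfolding ys_def using ic by (auto simp: in_set_conv_nth)
        have lis: "length ys = length ch + 1" unfolding ys_def by simp
        have isS: "\<And>x. ys ! (x+1) = ch ! x" unfolding ys_def by simp
        show ?thesis
        proof (cases "k \<in> set ys")
          case kin: True
          then obtain x where x: "x < length ch" "k = ch ! x" using mem kk by blast
          show ?thesis
          proof (cases "k + 1 \<in> set ys")
            case True
            then obtain y where y: "y < length ch" "k + 1 = ch ! y" using mem kk by force
            have nk: "new k = pi (ys ! x)" using newch x by simp
            have nk1: "new (k+1) = pi (ys ! y)" using newch y by simp
            consider "x < y" | "x = y" | "y < x" by arith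
            then show ?thesis
            proof cases
              case 1 then show ?thesis using nk nk1 vals[of x y] y lis by simp
            next
              case 2 then show ?thesis using x y by simp
            next
              case 3
              have "pi (ys ! (y+1)) \<le> pi (ys ! x)"
              proof (cases "y + 1 = x")
                case True then show ?thesis by simp
              next
                case False then show ?thesis using vals[of "y+1" x] 3 x lis by simp
              qed
              moreover have "pi (ys ! x) < pi (ys ! (x+1))" using vals[of x "x+1"] x lis by simp
              ultimately have "pi (k+1) < pi k" using isS x y by simp
              then show ?thesis using old by simp
            qed
          next
            case False
            have "new k = pi (ys ! x)" using newch x by simp
            also have "\<dots> < pi (ys ! (x+1))" using vals[of x "x+1"] x lis by simp
            also have "\<dots> = pi k" using isS x by simp
            also have "\<dots> < pi (k+1)" by (rule old)
            also have "\<dots> = new (k+1)" using newout False by simp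
            finally show ?thesis .
          qed
        next
          case knot: False
          have nk: "new k = pi k" using newout knot by simp
          show ?thesis
          proof (cases "k + 1 \<in> set ys")
            case True
            then obtain x where x: "x < length ch" "k + 1 = ch ! x" using mem kk by force
            have nk1: "new (k+1) = pi (ys ! x)" using newch x by simp
            have "pi (k+1) \<le> t" using P1 x by (metis nth_mem)
            then have "pi k \<le> t" using old by simp
            then have "\<not> pi (ys ! x) < pi k"
              using P3[of x k] x kk by simp
            moreover have "ys ! x \<noteq> k" using knot x lis by (metis less_SucI nth_mem Suc_eq_plus1)
            then have "pi (ys ! x) \<noteq> pi k" using inj by (metis injD)
            ultimately show ?thesis using nk nk1 by simp
          next
            case False
            then show ?thesis using nk newout old by simp
          qed
        qed
      qed
    qed
  qed
qed

end



context
  fixes n :: nat and lam :: "nat \<Rightarrow> nat" and T :: "nat \<Rightarrow> nat \<Rightarrow> nat"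
  assumes n0: "0 < n"
    and part: "n_partition n lam"
    and nz: "\<exists>i\<in>{1..n}. lam i \<noteq> 0"
    and ln: "lam n = 0"
    and ss: "semistandard n lam T"
begin

lemma inner:
  assumes j2: "2 \<le> j"
  shows "m \<le> col_len n lam j \<Longrightarrow> Q n lam T j (m+1) pi \<Longrightarrow>
    Q n lam T j 1 (fold (\<lambda>i. greedy_step n lam T j i) (rev [1..<m+1]) pi)"
proof (induction m arbitrary: pi)
  case 0 then show ?case by simp
next
  case (Suc m)
  have r: "rev [1..<Suc m + 1] = Suc m # rev [1..<m+1]" by simp
  have "Q n lam T j (Suc m) (greedy_step n lam T j (Suc m) pi)"
    using step[OF n0 part nz ln ss j2, of "Suc m" pi] Suc.prems by simp
  then have "Q n lam T j 1 (fold (\<lambda>i. greedy_step n lam T j i) (rev [1..<m+1]) (greedy_step n lam T j (Suc m) pi))"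
    using Suc.IH Suc.prems by simp
  then show ?case unfolding r by simp
qed

lemma column:
  assumes j2: "2 \<le> j" and inv: "Inv n lam T (j-1) pi"
  shows "Inv n lam T j (fold (\<lambda>i. greedy_step n lam T j i) (rev [1..<col_len n lam j + 1]) pi)"
proof -
  let ?c = "col_len n lam j"
  let ?c' = "col_len n lam (j-1)"
  let ?E = "{col_len n lam l | l. 1 \<le> l \<and> l \<le> j}"
  let ?E' = "{col_len n lam l | l. 1 \<le> l \<and> l \<le> j - 1}"
  have cc: "?c \<le> ?c'" using col_anti[OF n0 part nz ln ss, of "j-1" j] j2 by simp
  have perm: "pi permutes {1..n}" using inv unfolding Inv_def by blast
  have top: "\<And>k. 1 \<le> k \<Longrightarrow> k \<le> ?c' \<Longrightarrow> pi k = T (j-1) k" using inv unfolding Inv_def by blast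
  have srt: "\<And>k. ?c' < k \<Longrightarrow> k < n \<Longrightarrow> k \<notin> ?E' \<Longrightarrow> pi k < pi (k+1)" using inv unfolding Inv_def by blast
  have c'E: "?c' \<in> ?E" using j2 by force
  have EE: "?E' \<subseteq> ?E" by force
  have "Q n lam T j (?c + 1) pi" unfolding Q_def
  proof (intro conjI allI impI)
    show "pi permutes {1..n}" by (rule perm)
    fix k
    show "pi k = T (j-1) k" if "1 \<le> k \<and> k < ?c + 1" using top that cc by simp
    show "pi k = T j k" if "?c + 1 \<le> k \<and> k \<le> ?c" using that by simp
    show "pi k < pi (k+1)" if k: "?c < k \<and> k < n \<and> k \<notin> ?E"
    proof -
      consider "?c' < k" | "k = ?c'" | "k < ?c'" by arith
      then show ?thesis
      proof cases
        case 1 then show ?thesis using srt k EE by blast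
      next
        case 2
        have kE: "k \<in> ?E" using c'E 2 by (simp only:)
        from k have nE: "k \<notin> ?E" by (elim conjE)
        show ?thesis using notE[OF nE kE] .
      next
        case 3
        have "pi k = T (j-1) k" using top[of k] 3 k by simp
        moreover have "pi (k+1) = T (j-1) (k+1)" using top[of "k+1"] 3 by simp
        moreover have "T (j-1) k < T (j-1) (k+1)"
          using T_col[OF n0 part nz ln ss, of "j-1" k "k+1"] 3 k j2 by simp
        ultimately show ?thesis by simp
      qed
    qed
  qed
  then have "Q n lam T j 1 (fold (\<lambda>i. greedy_step n lam T j i) (rev [1..<?c+1]) pi)"
    using inner[OF j2, of ?c pi] by simp
  then show ?thesis unfolding Q_def Inv_def by auto
qed

lemma init: "Inv n lam T 1 (greedy_init n lam T)"
proof -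
  let ?c = "col_len n lam 1"
  define A where "A = {T 1 i | i. 1 \<le> i \<and> i \<le> ?c}"
  define L where "L = sorted_list_of_set ({1..n} - A)"
  have cn: "?c < n" using col_lt_n[OF n0 part nz ln ss, of 1] by simp
  have Aim: "A = T 1 ` {1..?c}" unfolding A_def by auto
  have injT: "inj_on (T 1) {1..?c}"
  proof (rule inj_onI)
    fix a b assume a: "a \<in> {1..?c}" and b: "b \<in> {1..?c}" and e: "T 1 a = T 1 b"
    show "a = b"
    proof (rule ccontr)
      assume "a \<noteq> b"
      then consider "a < b" | "b < a" by arith
      then show False
      proof cases
        case 1 then show False using T_col[OF n0 part nz ln ss, of 1 a b] a b e by simp
      next
        case 2 then show False using T_col[OF n0 part nz ln ss, of 1 b a] a b e by simp
      qed
    qed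
  qed
  have cardA: "card A = ?c" unfolding Aim using card_image[OF injT] by simp
  have Asub: "A \<subseteq> {1..n}" unfolding A_def using T_range[OF n0 part nz ln ss, of 1] by auto
  have setL: "set L = {1..n} - A" unfolding L_def by simp
  have lenL: "length L = n - ?c"
    unfolding L_def using card_Diff_subset[OF _ Asub] cardA by (simp add: finite_subset[OF Asub])
  have sL: "sorted_wrt (<) L" unfolding L_def by simp
  have dL: "distinct L" unfolding L_def by simp
  have gtop: "\<And>k. 1 \<le> k \<Longrightarrow> k \<le> ?c \<Longrightarrow> greedy_init n lam T k = T 1 k"
    unfolding greedy_init_def using cn by simp
  have gbot: "\<And>k. ?c < k \<Longrightarrow> k \<le> n \<Longrightarrow> greedy_init n lam T k = L ! (k - ?c - 1)"
    unfolding greedy_init_def L_def A_def by simp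
  have gout: "\<And>k. k \<notin> {1..n} \<Longrightarrow> greedy_init n lam T k = k"
    unfolding greedy_init_def by auto
  have TA: "\<And>k. 1 \<le> k \<Longrightarrow> k \<le> ?c \<Longrightarrow> T 1 k \<in> A" unfolding A_def by blast
  have LnA: "\<And>k. ?c < k \<Longrightarrow> k \<le> n \<Longrightarrow> L ! (k - ?c - 1) \<in> {1..n} - A"
  proof -
    fix k assume "?c < k" "k \<le> n"
    then have "k - ?c - 1 < length L" using lenL by simp
    then show "L ! (k - ?c - 1) \<in> {1..n} - A" using setL nth_mem by blast
  qed
  have perm: "greedy_init n lam T permutes {1..n}"
  proof (rule inj_imp_permutes)
    show "finite {1..n}" by simp
    show "greedy_init n lam T k = k" if "k \<notin> {1..n}" for k using gout that .
    show "greedy_init n lam T k \<in> {1..n}" if k: "k \<in> {1..n}" for k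
    proof (cases "k \<le> ?c")
      case True
      have k1: "1 \<le> k" using k by simp
      have "T 1 k \<in> A" using TA[OF k1 True] .
      then have "T 1 k \<in> {1..n}" using Asub by blast
      then show ?thesis using gtop[OF k1 True] by simp
    next
      case False
      have kk: "?c < k" "k \<le> n" using False k by auto
      show ?thesis using gbot[OF kk] LnA[OF kk] by simp
    qed
    show "inj_on (greedy_init n lam T) {1..n}"
    proof (rule inj_onI)
      fix a b assume a: "a \<in> {1..n}" and b: "b \<in> {1..n}" and e: "greedy_init n lam T a = greedy_init n lam T b"
      have a1: "1 \<le> a" "a \<le> n" using a by auto
      have b1: "1 \<le> b" "b \<le> n" using b by auto
      show "a = b"
      proof (cases "a \<le> ?c")
        case True
        note aT = True
        show ?thesis
        proof (cases "b \<le> ?c")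
          case True
          have "T 1 a = T 1 b" using e gtop[OF a1(1) aT] gtop[OF b1(1) True] by simp
          moreover have "a \<in> {1..?c}" "b \<in> {1..?c}" using a1 b1 aT True by auto
          ultimately show ?thesis using inj_onD[OF injT] by blast
        next
          case False
          have bb: "?c < b" using False by simp
          have "T 1 a \<in> A" using TA[OF a1(1) aT] .
          moreover have "L ! (b - ?c - 1) \<notin> A" using LnA[OF bb b1(2)] by blast
          moreover have "T 1 a = L ! (b - ?c - 1)" using e gtop[OF a1(1) aT] gbot[OF bb b1(2)] by simp
          ultimately show ?thesis by simp
        qed
      next
        case False
        have aa: "?c < a" using False by simp
        show ?thesis
        proof (cases "b \<le> ?c")
          case True
          have "T 1 b \<in> A" using TA[OF b1(1) True] .
          moreover have "L ! (a - ?c - 1) \<notin> A" using LnA[OF aa a1(2)] by blast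
          moreover have "T 1 b = L ! (a - ?c - 1)" using e gtop[OF b1(1) True] gbot[OF aa a1(2)] by simp
          ultimately show ?thesis by simp
        next
          case False
          have bb: "?c < b" using False by simp
          have "L ! (a - ?c - 1) = L ! (b - ?c - 1)" using e gbot[OF aa a1(2)] gbot[OF bb b1(2)] by simp
          moreover have "a - ?c - 1 < length L" "b - ?c - 1 < length L" using a1 b1 aa bb lenL by auto
          ultimately have "a - ?c - 1 = b - ?c - 1" using nth_eq_iff_index_eq[OF dL] by blast
          then show ?thesis using aa bb by simp
        qed
      qed
    qed
  qed
  show ?thesis unfolding Inv_def
  proof (intro conjI allI impI)
    show "greedy_init n lam T permutes {1..n}" by (rule perm)
    fix k
    show "greedy_init n lam T k = T 1 k" if "1 \<le> k \<and> k \<le> ?c" using gtop that by simp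
    show "greedy_init n lam T k < greedy_init n lam T (k+1)"
      if k: "?c < k \<and> k < n \<and> k \<notin> {col_len n lam l | l. 1 \<le> l \<and> l \<le> 1}"
    proof -
      have "greedy_init n lam T k = L ! (k - ?c - 1)" using gbot k by simp
      moreover have "greedy_init n lam T (k+1) = L ! (k - ?c)" using gbot[of "k+1"] k by simp
      moreover have "L ! (k - ?c - 1) < L ! (k - ?c)"
      proof -
        have kc: "?c < k" using k by blast
        have i1: "k - ?c - 1 < k - ?c" using kc by arith
        have kn: "k < n" using k by blast
        have i2: "k - ?c < length L" using kc kn lenL by arith
        show ?thesis using sorted_wrt_nth_less[OF sL i1 i2] .
      qed
      ultimately show ?thesis by simp
    qed
  qed
qed

lemma outer:
  "1 \<le> m \<Longrightarrow> m \<le> lam 1 \<Longrightarrow>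
   Inv n lam T m (fold (\<lambda>j pi. fold (\<lambda>i. greedy_step n lam T j i) (rev [1..<col_len n lam j + 1]) pi)
          [2..<m + 1] (greedy_init n lam T))"
proof (induction m)
  case 0 then show ?case by simp
next
  case (Suc m)
  show ?case
  proof (cases "m = 0")
    case True then show ?thesis using init by simp
  next
    case False
    have u: "[2..<Suc m + 1] = [2..<m+1] @ [Suc m]" using False by simp
    have "Inv n lam T m (fold (\<lambda>j pi. fold (\<lambda>i. greedy_step n lam T j i) (rev [1..<col_len n lam j + 1]) pi)
          [2..<m + 1] (greedy_init n lam T))" using Suc False by simp
    then show ?thesis unfolding u using column[of "Suc m"] False by simp
  qed
qed

lemma final:
  assumes inv: "Inv n lam T (lam 1) pi"
  shows "pi \<in> S_lam n lam"
proof -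
  let ?CL = "col_lengths n lam"
  let ?cl = "col_len n lam (lam 1)"
  define Ls where "Ls = sorted_list_of_set ?CL"
  define z where "z = zeta n lam"
  have l1: "1 \<le> lam 1" using lam1[OF n0 part nz ln ss] .
  have finCL: "finite ?CL" unfolding col_lengths_def by simp
  have CLb: "\<And>x. x \<in> ?CL \<Longrightarrow> 0 < x \<and> x < n"
    unfolding col_lengths_def using col_ge1[OF n0 part nz ln ss] col_lt_n[OF n0 part nz ln ss] by force
  have zdef: "z = 0 # Ls @ [n]" unfolding z_def zeta_def Ls_def by simp
  have sLs: "sorted_wrt (<) Ls" unfolding Ls_def by simp
  have setLs: "set Ls = ?CL" unfolding Ls_def using finCL by simp
  have lenLs: "length Ls = card ?CL" unfolding Ls_def by simp
  have sz: "sorted_wrt (<) z" unfolding zdef using sLs setLs CLb n0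
    by (auto simp: sorted_wrt_append)
  have zle: "\<And>x. x \<in> set z \<Longrightarrow> x \<le> n" unfolding zdef using setLs CLb by force
  have lenz: "length z = card ?CL + 2" unfolding zdef using lenLs by simp
  have mono: "\<And>a b. a \<le> b \<Longrightarrow> b < length z \<Longrightarrow> z ! a \<le> z ! b"
    using sz by (metis le_eq_less_or_eq less_imp_le sorted_wrt_nth_less)
  have perm: "pi permutes {1..n}" using inv unfolding Inv_def by blast
  have top: "\<And>k. 1 \<le> k \<Longrightarrow> k \<le> ?cl \<Longrightarrow> pi k = T (lam 1) k" using inv unfolding Inv_def by blast
  have srt: "\<And>k. ?cl < k \<Longrightarrow> k < n \<Longrightarrow> k \<notin> ?CL \<Longrightarrow> pi k < pi (k+1)"
    using inv unfolding Inv_def col_lengths_def by blast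
  have clCL: "?cl \<in> ?CL" unfolding col_lengths_def using l1 by blast
  show ?thesis unfolding S_lam_def
  proof (intro CollectI conjI allI impI)
    show "pi permutes {1..n}" by (rule perm)
    fix h k
    assume h: "1 \<le> h \<and> h \<le> card ?CL + 1"
      and k: "zeta n lam ! (h - 1) + 1 \<le> k \<and> k < zeta n lam ! h"
    have hl: "h < length z" using h lenz by simp
    have k1: "z ! (h-1) < k" "k < z ! h" using k unfolding z_def by auto
    have hl': "h - 1 < length z" using hl by simp
    have knz: "k \<notin> set z"
    proof
      assume "k \<in> set z"
      then obtain m where m: "m < length z" "k = z ! m" by (auto simp: in_set_conv_nth)
      show False
      proof (cases "m \<le> h - 1")
        case True then show False using mono[of m "h-1"] m k1 hl' by simp
      next
        case False
        then have "h \<le> m" using h by arith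
        then have "z ! h \<le> z ! m" using mono m(1) by blast
        then show False using m k1 by simp
      qed
    qed
    have kCL: "k \<notin> ?CL" using knz setLs unfolding zdef by simp
    have kn: "k < n" using zle[of "z ! h"] hl k1 by (metis nth_mem order_less_le_trans)
    have kpos: "1 \<le> k" using k1 by simp
    consider "k < ?cl" | "k = ?cl" | "?cl < k" by arith
    then show "pi k < pi (k+1)"
    proof cases
      case 1
      have "pi k = T (lam 1) k" using top kpos 1 by simp
      moreover have "pi (k+1) = T (lam 1) (k+1)" using top 1 by simp
      moreover have "T (lam 1) k < T (lam 1) (k+1)"
        using T_col[OF n0 part nz ln ss, of "lam 1" k "k+1"] 1 kpos l1 by simp
      ultimately show ?thesis by simp
    next
      case 2 then show ?thesis using kCL clCL by simp
    next
      case 3 then show ?thesis using srt kn kCL by simp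
    qed
  qed
qed

end

theorem corollary4p2:
  fixes n :: nat and lam :: "nat \<Rightarrow> nat" and T :: "nat \<Rightarrow> nat \<Rightarrow> nat"
  assumes "0 < n"
    and "n_partition n lam"
    and "\<exists>i\<in>{1..n}. lam i \<noteq> 0"
    and "lam n = 0"
    and "semistandard n lam T"
  shows "greedy_perm n lam T \<in> S_lam n lam"
proof -
  have l1: "1 \<le> lam 1" using lam1[OF assms] .
  show ?thesis
    unfolding greedy_perm_def
    using final[OF assms outer[OF assms l1 order_refl]] .
qed



end
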